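(* Let $\mathcal X$ be a finite set with $|\mathcal X|\ge n\ge1$, $s:2^{\mathcal X}\to\mathbb R$ non-negative and monotone, $d$ a metric on $\mathcal X$, $\mathrm{div}$ the associated sum-dispersion, $\lambda>0$, and $\alpha\in(0,1]$. Let $B_n$ be the output of an $\alpha$-approximate greedy run for the set function $\tilde a:=\tfrac12 s+\lambda\,\mathrm{div}$ with cardinality $n$, let $a:=s+\lambda\,\mathrm{div}$, and let $B_n^*\in\arg\max_{B\subseteq\mathcal X,|B|=n}a(B)$. Then $$a(B_n)\ge\frac{\alpha\hat\gamma}{2}\,a(B_n^* ),\qquad\hat\gamma:=\gamma_{B_n^*\cup B_n,n}(s).$$
   Context: Marginal gain: $\Delta_f(x\mid B):=f(B\cup\{x\})-f(B)$ for a set function $f$. $s$ is monotone if $\Delta_s(x\mid B)\ge0$ for all $B$ and $x\notin B$; non-negative if $s(B)\ge0$ for all $B$. Sum-dispersion: $\mathrm{div}(B):=\frac12\sum_{x\in B}\sum_{x'\in B}d(x,x')$. An $\alpha$-approximate greedy run for a set function $f$ with cardinality $n$: $B_0=\emptyset$ and for $i=0,\dots,n-1$ an element $x_i\in\mathcal X\setminus B_i$ is chosen with $\Delta_f(x_i\mid B_i)\ge\alpha\max_{x\in\mathcal X\setminus B_i}\Delta_f(x\mid B_i)$, and $B_{i+1}=B_i\cup\{x_i\}$; its output is $B_n$. Submodularity ratio: $\gamma_{B,n}(s):=\min_{S\subseteq\mathcal X,\ B'\subseteq B\setminus S,\ |S|\le n}\frac{\sum_{x\in S}\Delta_s(x\mid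 B')}{s(B'\cup S)-s(B')}$, with $0/0:=1$ and $c/0:=+\infty$ for $c>0$. *)

theory Defs
  imports Complex_Main "HOL-Library.Extended_Real"
begin

definition marg :: "('a set \<Rightarrow> real) \<Rightarrow> 'a \<Rightarrow> 'a set \<Rightarrow> real" where
  "marg f x B = f (B \<union> {x}) - f B"

definition monotone_sf :: "'a set \<Rightarrow> ('a set \<Rightarrow> real) \<Rightarrow> bool" where
  "monotone_sf X s \<longleftrightarrow> (\<forall>B x. B \<subseteq> X \<longrightarrow> x \<in> X \<longrightarrow> x \<notin> B \<longrightarrow> marg s x B \<ge> 0)"

definition nonneg_sf :: "'a set \<Rightarrow> ('a set \<Rightarrow> real) \<Rightarrow> bool" where
  "nonneg_sf X s \<longleftrightarrow> (\<forall>B. B \<subseteq> X \<longrightarrow> s B \<ge> 0)"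

definition is_metric_on :: "'a set \<Rightarrow> ('a \<Rightarrow> 'a \<Rightarrow> real) \<Rightarrow> bool" where
  "is_metric_on X d \<longleftrightarrow>
     (\<forall>x\<in>X. \<forall>y\<in>X. d x y \<ge> 0 \<and> (d x y = 0 \<longleftrightarrow> x = y) \<and> d x y = d y x) \<and>
     (\<forall>x\<in>X. \<forall>y\<in>X. \<forall>z\<in>X. d x z \<le> d x y + d y z)"

definition dispersion :: "('a \<Rightarrow> 'a \<Rightarrow> real) \<Rightarrow> 'a set \<Rightarrow> real" where
  "dispersion d B = (1/2) * (\<Sum>x\<in>B. \<Sum>x'\<in>B. d x x')"

text \<open>An alpha-approximate greedy run for f with cardinality n, given by its list of
  chosen elements xs = [x_0, ..., x_{n-1}]; B_i = set (take i xs); its output is set xs.\<close>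
definition approx_greedy_run ::
  "'a set \<Rightarrow> ('a set \<Rightarrow> real) \<Rightarrow> real \<Rightarrow> nat \<Rightarrow> 'a list \<Rightarrow> bool" where
  "approx_greedy_run X f \<alpha> n xs \<longleftrightarrow> length xs = n \<and>
     (\<forall>i<n. xs ! i \<in> X - set (take i xs) \<and>
        (\<forall>x\<in>X - set (take i xs).
            marg f (xs ! i) (set (take i xs)) \<ge> \<alpha> * marg f x (set (take i xs))))"

definition ext_ratio :: "real \<Rightarrow> real \<Rightarrow> ereal" where
  "ext_ratio c e = (if e = 0 then (if c = 0 then 1 else if c > 0 then \<infinity> else -\<infinity>)
                    else ereal (c / e))"

definition subm_ratio :: "'a set \<Rightarrow> ('a set \<Rightarrow> real) \<Rightarrow> 'a set \<Rightarrow> nat \<Rightarrow> ereal" where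
  "subm_ratio X s B n = (INF p \<in> {(S, B'). S \<subseteq> X \<and> B' \<subseteq> B - S \<and> card S \<le> n}.
      ext_ratio (\<Sum>x\<in>fst p. marg s x (snd p)) (s (snd p \<union> fst p) - s (snd p)))"

end

theory Submission
  imports Defs
begin

definition ddist :: "('a \<Rightarrow> 'a \<Rightarrow> real) \<Rightarrow> 'a set \<Rightarrow> 'a set \<Rightarrow> real" where
  "ddist d P Q = (\<Sum>x\<in>P. \<Sum>y\<in>Q. d x y)"

lemma mono_union:
  assumes "monotone_sf X s" "finite D" "B \<union> D \<subseteq> X"
  shows "s B \<le> s (B \<union> D)"
  using assms(2,3)
proof (induction D rule: finite_induct)
  case empty then show ?case by simp
next
  case (insert x F)
  have IH: "s B \<le> s (B \<union> F)" using insert by auto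
  show ?case
  proof (cases "x \<in> B \<union> F")
    case True
    then have "B \<union> insert x F = B \<union> F" by auto
    then show ?thesis using IH by simp
  next
    case False
    have "marg s x (B \<union> F) \<ge> 0" using assms(1) insert.prems False
      unfolding monotone_sf_def by auto
    moreover have "(B \<union> F) \<union> {x} = B \<union> insert x F" by auto
    ultimately show ?thesis using IH unfolding marg_def by auto
  qed
qed

lemma mono_sub:
  assumes "monotone_sf X s" "finite C" "C \<subseteq> X" "B \<subseteq> C"
  shows "s B \<le> s C"
proof -
  have "s B \<le> s (B \<union> (C - B))"
    by (rule mono_union[OF assms(1)]) (use assms in auto)
  moreover have "B \<union> (C - B) = C" using assms by auto
  ultimately show ?thesis by simp
qed

lemma subm_ratio_props:
  assumes "monotone_sf X s" "B \<subseteq> X" "finite X"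
  shows "\<exists>g. subm_ratio X s B n = ereal g \<and> 0 \<le> g \<and> g \<le> 1 \<and>
     (\<forall>S B'. S \<subseteq> X \<longrightarrow> B' \<subseteq> B - S \<longrightarrow> card S \<le> n \<longrightarrow> finite S \<longrightarrow> finite B' \<longrightarrow>
        g * (s (B' \<union> S) - s B') \<le> (\<Sum>x\<in>S. marg s x B'))"
proof -
  let ?I = "{(S, B'). S \<subseteq> X \<and> B' \<subseteq> B - S \<and> card S \<le> n}"
  let ?h = "\<lambda>p. ext_ratio (\<Sum>x\<in>fst p. marg s x (snd p)) (s (snd p \<union> fst p) - s (snd p))"
  have R: "subm_ratio X s B n = (INF p\<in>?I. ?h p)" unfolding subm_ratio_def by simp
  have le1: "subm_ratio X s B n \<le> 1"
  proof -
    have "({}, {}) \<in> ?I" by auto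
    then have "(INF p\<in>?I. ?h p) \<le> ?h ({}, {})" by (rule INF_lower)
    also have "\<dots> = 1" by (simp add: ext_ratio_def)
    finally show ?thesis using R by simp
  qed
  have ge0: "subm_ratio X s B n \<ge> 0"
    unfolding R
  proof (rule INF_greatest)
    fix p assume "p \<in> ?I"
    then obtain S B' where p: "p = (S, B')" "S \<subseteq> X" "B' \<subseteq> B - S" by auto
    have B'X: "B' \<subseteq> X" using p assms by auto
    have c: "(\<Sum>x\<in>S. marg s x B') \<ge> 0"
      apply (rule sum_nonneg) using p B'X assms(1) unfolding monotone_sf_def by blast
    have e: "s (B' \<union> S) - s B' \<ge> 0"
    proof (cases "finite S")
      case True
      then show ?thesis using mono_union[OF assms(1) True, of B'] p assms by auto
    next
      case False
      then show ?thesis using p assms(3) finite_subset by blast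
    qed
    show "0 \<le> ?h p" using c e p by (auto simp: ext_ratio_def)
  qed
  obtain g where g: "subm_ratio X s B n = ereal g"
    using le1 ge0 by (cases "subm_ratio X s B n") auto
  have g01: "0 \<le> g" "g \<le> 1" using le1 ge0 g by auto
  have gprop: "g * (s (B' \<union> S) - s B') \<le> (\<Sum>x\<in>S. marg s x B')"
    if "S \<subseteq> X" "B' \<subseteq> B - S" "card S \<le> n" "finite S" "finite B'" for S B'
  proof -
    have "(S, B') \<in> ?I" using that by auto
    then have "(INF p\<in>?I. ?h p) \<le> ?h (S, B')" by (rule INF_lower)
    then have le: "ereal g \<le> ext_ratio (\<Sum>x\<in>S. marg s x B') (s (B' \<union> S) - s B')"
      using R g by simp
    have B'X: "B' \<subseteq> X" using that assms by auto
    have c: "(\<Sum>x\<in>S. marg s x B') \<ge> 0"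
      apply (rule sum_nonneg) using that B'X assms(1) unfolding monotone_sf_def by blast
    have e: "s (B' \<union> S) - s B' \<ge> 0"
      using mono_union[OF assms(1) that(4), of B'] that assms by auto
    show ?thesis
    proof (cases "s (B' \<union> S) - s B' = 0")
      case True then show ?thesis using c by simp
    next
      case False
      then have "g \<le> (\<Sum>x\<in>S. marg s x B') / (s (B' \<union> S) - s B')"
        using le by (simp add: ext_ratio_def)
      then show ?thesis using False e by (simp add: pos_le_divide_eq mult.commute)
    qed
  qed
  show ?thesis using g g01 gprop by blast
qed

lemma disp_insert:
  assumes "finite B" "x \<notin> B" "d x x = 0" "\<And>y. y \<in> B \<Longrightarrow> d y x = d x y"
  shows "dispersion d (B \<union> {x}) - dispersion d B = (\<Sum>y\<in>B. d x y)"
proof -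
  have s1: "(\<Sum>u\<in>insert x B. \<Sum>v\<in>insert x B. d u v)
     = (\<Sum>v\<in>B. d x v) + (\<Sum>u\<in>B. d u x) + (\<Sum>u\<in>B. \<Sum>v\<in>B. d u v)"
    using assms by (simp add: sum.distrib)
  have s2: "(\<Sum>u\<in>B. d u x) = (\<Sum>v\<in>B. d x v)" using assms(4) by (rule sum.cong[OF refl])
  show ?thesis by (simp only: dispersion_def Un_insert_right Un_empty_right s1 s2) (simp add: field_simps)
qed

lemma disp_union:
  assumes "finite A" "finite C" "A \<inter> C = {}" "\<And>x y. x \<in> A \<union> C \<Longrightarrow> y \<in> A \<union> C \<Longrightarrow> d y x = d x y"
  shows "dispersion d (A \<union> C) = dispersion d A + dispersion d C + ddist d C A"
proof -
  have "(\<Sum>u\<in>A \<union> C. \<Sum>v\<in>A \<union> C. d u v) =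
     (\<Sum>u\<in>A. \<Sum>v\<in>A. d u v) + (\<Sum>u\<in>A. \<Sum>v\<in>C. d u v) + ((\<Sum>u\<in>C. \<Sum>v\<in>A. d u v) + (\<Sum>u\<in>C. \<Sum>v\<in>C. d u v))"
    using assms by (simp add: sum.union_disjoint sum.distrib)
  also have "(\<Sum>u\<in>A. \<Sum>v\<in>C. d u v) = (\<Sum>v\<in>C. \<Sum>u\<in>A. d u v)" by (rule sum.swap)
  also have "\<dots> = (\<Sum>v\<in>C. \<Sum>u\<in>A. d v u)" using assms(4) by (intro sum.cong refl) auto
  finally show ?thesis unfolding dispersion_def ddist_def by (simp add: algebra_simps)
qed

lemma ddist_swap:
  assumes "\<And>x y. x \<in> P \<Longrightarrow> y \<in> Q \<Longrightarrow> d y x = d x y"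
  shows "ddist d P Q = ddist d Q P"
  unfolding ddist_def
  by (subst sum.swap) (use assms in \<open>auto intro!: sum.cong\<close>)

lemma ddist_union2:
  assumes "finite A" "finite B" "A \<inter> B = {}"
  shows "ddist d C (A \<union> B) = ddist d C A + ddist d C B"
  unfolding ddist_def using assms by (simp add: sum.union_disjoint sum.distrib)

lemma metric_lemma:
  assumes "finite P" "finite Y" "P \<subseteq> X" "Y \<subseteq> X" "is_metric_on X d"
  shows "real (card Y) * dispersion d P \<le> (real (card P) - 1) * ddist d P Y"
proof -
  have dxx: "d x x = 0" if "x \<in> X" for x using assms(5) that unfolding is_metric_on_def by auto
  have sym: "d x y = d y x" if "x \<in> X" "y \<in> X" for x y using assms(5) that unfolding is_metric_on_def by auto
  have tri: "d x z \<le> d x y + d y z" if "x \<in> X" "y \<in> X" "z \<in> X" for x y z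
    using assms(5) that unfolding is_metric_on_def by auto
  have per: "(\<Sum>x\<in>P. \<Sum>x'\<in>P. d x x') \<le> 2 * (real (card P) - 1) * (\<Sum>x\<in>P. d x y)" if y: "y \<in> Y" for y
  proof -
    have yX: "y \<in> X" using y assms by auto
    have "(\<Sum>x\<in>P. \<Sum>x'\<in>P. d x x') = (\<Sum>x\<in>P. \<Sum>x'\<in>P - {x}. d x x')"
    proof (rule sum.cong[OF refl])
      fix x assume x: "x \<in> P"
      have "(\<Sum>x'\<in>P. d x x') = d x x + (\<Sum>x'\<in>P - {x}. d x x')"
        using x assms(1) by (simp add: sum.remove)
      then show "(\<Sum>x'\<in>P. d x x') = (\<Sum>x'\<in>P - {x}. d x x')" using dxx x assms(3) by auto
    qed
    also have "\<dots> \<le> (\<Sum>x\<in>P. \<Sum>x'\<in>P - {x}. d x y + d y x')"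
      by (intro sum_mono) (use assms(3) yX in \<open>auto intro!: tri\<close>)
    also have "\<dots> = (\<Sum>x\<in>P. (real (card P) - 1) * d x y + ((\<Sum>x'\<in>P. d y x') - d y x))"
    proof (rule sum.cong[OF refl])
      fix x assume x: "x \<in> P"
      have "(\<Sum>x'\<in>P. d y x') = d y x + (\<Sum>x'\<in>P - {x}. d y x')"
        using x assms(1) by (simp add: sum.remove)
      moreover have "card (P - {x}) = card P - 1" using x assms(1) by simp
      moreover have "card P \<ge> 1" proof -
        have "card P > 0" using x assms(1) card_gt_0_iff by blast
        then show ?thesis by linarith
      qed
      ultimately show "(\<Sum>x'\<in>P - {x}. d x y + d y x') = (real (card P) - 1) * d x y + ((\<Sum>x'\<in>P. d y x') - d y x)"
        by (simp add: sum.distrib of_nat_diff)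
    qed
    also have "\<dots> = (real (card P) - 1) * (\<Sum>x\<in>P. d x y) + real (card P) * (\<Sum>x'\<in>P. d y x') - (\<Sum>x\<in>P. d y x)"
      by (simp add: sum.distrib sum_subtractf sum_distrib_left)
    also have "(\<Sum>x\<in>P. d y x) = (\<Sum>x\<in>P. d x y)" using sym yX assms(3) by (intro sum.cong) auto
    finally show ?thesis by (simp add: algebra_simps)
  qed
  have "real (card Y) * (\<Sum>x\<in>P. \<Sum>x'\<in>P. d x x') = (\<Sum>y\<in>Y. (\<Sum>x\<in>P. \<Sum>x'\<in>P. d x x'))" by simp
  also have "\<dots> \<le> (\<Sum>y\<in>Y. 2 * (real (card P) - 1) * (\<Sum>x\<in>P. d x y))"
    by (rule sum_mono) (rule per)
  also have "\<dots> = 2 * (real (card P) - 1) * ddist d P Y"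
    unfolding ddist_def by (simp add: sum_distrib_left sum.swap[of _ Y])
  finally show ?thesis unfolding dispersion_def by (simp add: algebra_simps)
qed

lemma count_ineq:
  fixes a b c i p dA dC dAC dBC :: real
  assumes "dA \<ge> 0" "dC \<ge> 0" "dAC \<ge> 0" "dBC \<ge> 0" "a \<ge> 0" "b \<ge> 0" "c \<ge> 2" "a + b = i" "a + c = p"
    "i \<le> p"
    "(c-1)*dBC \<ge> b*dC" "(c-1)*dAC \<ge> a*dC" "(a-1)*dAC \<ge> c*dA"
  shows "i*c*(dA+dC+dAC) \<le> p*(p-1)*(dAC+dBC)"
proof -
  have i0: "i \<ge> 0" using assms by simp
  have h1: "i*(c*dA) \<le> i*((a-1)*dAC)" by (rule mult_left_mono[OF assms(13) i0])
  have h2a: "(p-i)*((c-1)*dAC) \<ge> (p-i)*(a*dC)" using assms(12,10) by (intro mult_left_mono) auto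
  have h2b: "p*((c-1)*dBC) \<ge> p*(b*dC)" using assms(11,5,7,9) by (intro mult_left_mono) auto
  have X0: "(p-i)*dAC + p*dBC \<ge> 0" using assms by simp
  have h3: "(c-1)*((p-i)*dAC + p*dBC) \<le> (p-1)*((p-i)*dAC + p*dBC)"
    using X0 assms by (intro mult_right_mono) auto
  have ii: "i = a + b" "p = a + c" using assms(8,9) by auto
  have e: "(p-i)*a + p*b = i*c" unfolding ii by (simp add: algebra_simps)
  have e2: "(p - i) * (a * dC) + p * (b * dC) = i*c*dC" using e by (metis distrib_right mult.assoc)
  have e3: "a*(dAC*i) + c*(dAC*i) = p*(dAC*i)" unfolding ii by (simp add: algebra_simps)
  show ?thesis using h1 h2a h2b h3 e2 e3 by (simp add: algebra_simps)
qed

lemma sum_real_lessThan: "(\<Sum>i<n. real i) = real n * (real n - 1) / 2"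
  by (induction n) (auto simp: field_simps)


theorem mainTheorem11:
  fixes X :: "'a set" and s :: "'a set \<Rightarrow> real" and d :: "'a \<Rightarrow> 'a \<Rightarrow> real"
    and lam \<alpha> :: real and n :: nat and xs :: "'a list" and Bstar :: "'a set"
  assumes "finite X" and "1 \<le> n" and "n \<le> card X"
    and "nonneg_sf X s" and "monotone_sf X s"
    and "is_metric_on X d"
    and "lam > 0" and "0 < \<alpha>" and "\<alpha> \<le> 1"
    and "approx_greedy_run X (\<lambda>B. (1/2) * s B + lam * dispersion d B) \<alpha> n xs"
    and "Bstar \<subseteq> X" and "card Bstar = n"
    and "\<forall>B. B \<subseteq> X \<and> card B = n \<longrightarrow>
           s B + lam * dispersion d B \<le> s Bstar + lam * dispersion d Bstar"
  shows "ereal (s (set xs) + lam * dispersion d (set xs)) \<ge>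
           ereal (\<alpha> / 2) * subm_ratio X s (Bstar \<union> set xs) n
             * ereal (s Bstar + lam * dispersion d Bstar)"
proof -
  define f where "f = (\<lambda>B. (1/2) * s B + lam * dispersion d B)"
  define G where "G = (\<lambda>i. set (take i xs))"
  define D where "D = dispersion d Bstar"
  have dxx: "\<And>x. x \<in> X \<Longrightarrow> d x x = 0"
    and dsym: "\<And>x y. x \<in> X \<Longrightarrow> y \<in> X \<Longrightarrow> d y x = d x y"
    and dnn: "\<And>x y. x \<in> X \<Longrightarrow> y \<in> X \<Longrightarrow> d x y \<ge> 0"
    using assms(6) unfolding is_metric_on_def by auto
  have run: "approx_greedy_run X f \<alpha> n xs" using assms(10) by (simp add: f_def)
  have len: "length xs = n" using run unfolding approx_greedy_run_def by simp
  have xin: "xs ! i \<in> X" "xs ! i \<notin> G i" if "i < n" for i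
    using run that unfolding approx_greedy_run_def G_def by auto
  have grd: "marg f (xs ! i) (G i) \<ge> \<alpha> * marg f x (G i)" if "i < n" "x \<in> X" "x \<notin> G i" for i x
    using run that unfolding approx_greedy_run_def G_def by auto
  have Gsuc: "G (Suc i) = insert (xs ! i) (G i)" if "i < n" for i
    unfolding G_def using len that by (simp add: take_Suc_conv_app_nth)
  have Gfin: "finite (G i)" for i by (simp add: G_def)
  have setX: "set xs \<subseteq> X"
  proof
    fix x assume "x \<in> set xs"
    then obtain j where "j < n" "x = xs ! j" using len by (auto simp: in_set_conv_nth)
    then show "x \<in> X" using xin by auto
  qed
  have Gsub: "G i \<subseteq> set xs" for i unfolding G_def by (rule set_take_subset)
  have GX: "G i \<subseteq> X" for i using Gsub setX by blast
  have Gn: "G n = set xs" using len by (simp add: G_def)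
  have G0: "G 0 = {}" by (simp add: G_def)
  have cardG: "card (G i) = i" if "i \<le> n" for i
    using that
  proof (induction i)
    case 0 then show ?case by (simp add: G0)
  next
    case (Suc i)
    then have "i < n" by simp
    then show ?case using Suc Gsuc xin Gfin by simp
  qed
  have snn: "s B \<ge> 0" if "B \<subseteq> X" for B using assms(4) that unfolding nonneg_sf_def by auto
  have dispnn: "dispersion d B \<ge> 0" if "B \<subseteq> X" for B
    unfolding dispersion_def using that dnn by (auto intro!: sum_nonneg mult_nonneg_nonneg)
  have fnn: "f B \<ge> 0" if "B \<subseteq> X" for B
    unfolding f_def using snn[OF that] dispnn[OF that] assms(7) by simp
  have margf: "marg f x B = (1/2) * marg s x B + lam * (\<Sum>y\<in>B. d x y)"
    if "x \<in> X" "x \<notin> B" "B \<subseteq> X" "finite B" for x B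
  proof -
    have "dispersion d (B \<union> {x}) - dispersion d B = (\<Sum>y\<in>B. d x y)"
      by (rule disp_insert) (use that dxx in \<open>auto intro: dsym\<close>)
    then show ?thesis unfolding marg_def f_def by (simp add: algebra_simps)
  qed
  have BX: "Bstar \<union> set xs \<subseteq> X" using assms(11) setX by blast
  obtain g where g: "subm_ratio X s (Bstar \<union> set xs) n = ereal g" "0 \<le> g" "g \<le> 1"
    and gprop: "\<And>S B'. S \<subseteq> X \<Longrightarrow> B' \<subseteq> (Bstar \<union> set xs) - S \<Longrightarrow> card S \<le> n \<Longrightarrow> finite S \<Longrightarrow> finite B' \<Longrightarrow>
        g * (s (B' \<union> S) - s B') \<le> (\<Sum>x\<in>S. marg s x B')"
    using subm_ratio_props[OF assms(5) BX assms(1), of n] by blast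
  define m where "m i = marg f (xs ! i) (G i)" for i
  have tele: "f (G n) = f (G 0) + (\<Sum>i<n. m i)"
  proof -
    have "(\<Sum>i<n. m i) = (\<Sum>i<n. f (G (Suc i)) - f (G i))"
      by (rule sum.cong[OF refl]) (simp add: m_def marg_def Gsuc)
    also have "\<dots> = f (G n) - f (G 0)" by (rule sum_lessThan_telescope)
    finally show ?thesis by simp
  qed
  have fG0: "f (G 0) \<ge> 0" using fnn GX by blast
  have finB: "finite Bstar" using assms(1,11) finite_subset by blast
  have sO: "s Bstar \<ge> 0" using snn assms(11) by blast
  have D0: "D \<ge> 0" unfolding D_def using dispnn assms(11) by blast
  have sGn: "s (set xs) \<ge> 0" using snn setX by blast
  have dGn: "dispersion d (set xs) \<ge> 0" using dispnn setX by blast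
  have goal_real: "\<alpha> / 2 * g * (s Bstar + lam * D) \<le> s (set xs) + lam * dispersion d (set xs)"
  proof (cases "\<forall>i<n. card (Bstar - G i) \<ge> 2")
    case True
    have "card (Bstar - G 0) \<ge> 2" using True assms(2) by auto
    then have n2: "n \<ge> 2" using assms(12) G0 by simp
    define K where "K = s Bstar - s (set xs)"
    have step: "m i \<ge> \<alpha> * (g * K / (2 * real n) + lam * (real i / (real n * (real n - 1))) * D)"
      if i: "i < n" for i
    proof -
      define Gi where "Gi = G i"
      define C where "C = Bstar - Gi"
      define A where "A = Bstar \<inter> Gi"
      define Bb where "Bb = Gi - Bstar"
      have cC: "card C \<ge> 2" using True i unfolding C_def Gi_def by auto
      have finGi: "finite Gi" "finite C" "finite A" "finite Bb"
        unfolding Gi_def C_def A_def Bb_def using Gfin finB by auto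
      have subs: "Gi \<subseteq> X" "C \<subseteq> X" "A \<subseteq> X" "Bb \<subseteq> X"
        unfolding Gi_def C_def A_def Bb_def using GX assms(11) by auto
      have Gi_eq: "Gi = A \<union> Bb" "A \<inter> Bb = {}" unfolding A_def Bb_def by auto
      have O_eq: "Bstar = A \<union> C" "A \<inter> C = {}" unfolding A_def C_def by auto
      have cab: "card A + card Bb = i"
        using card_Un_disjoint[OF finGi(3,4) Gi_eq(2)] Gi_eq(1) cardG[of i] i unfolding Gi_def by simp
      have cac: "card A + card C = n"
        using card_Un_disjoint[OF finGi(3,2) O_eq(2)] O_eq(1) assms(12) by simp
      have m1: "real (card Bb) * dispersion d C \<le> (real (card C) - 1) * ddist d C Bb"
        by (rule metric_lemma[OF finGi(2,4) subs(2,4) assms(6)])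
      have m2: "real (card A) * dispersion d C \<le> (real (card C) - 1) * ddist d C A"
        by (rule metric_lemma[OF finGi(2,3) subs(2,3) assms(6)])
      have m3: "real (card C) * dispersion d A \<le> (real (card A) - 1) * ddist d A C"
        by (rule metric_lemma[OF finGi(3,2) subs(3,2) assms(6)])
      have swp: "ddist d A C = ddist d C A" by (rule ddist_swap) (metis dsym subs(2,3) subsetD)
      have Ddec: "D = dispersion d A + dispersion d C + ddist d C A"
        unfolding D_def O_eq(1) by (rule disp_union[OF finGi(3,2) O_eq(2)]) (metis Un_iff dsym subs(2,3) subsetD)
      have ddG: "ddist d C Gi = ddist d C A + ddist d C Bb"
        unfolding Gi_eq(1) by (rule ddist_union2[OF finGi(3,4) Gi_eq(2)])
      have ddnn: "ddist d C A \<ge> 0" "ddist d C Bb \<ge> 0"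
        unfolding ddist_def by (intro sum_nonneg; meson dnn subs(2,3,4) subsetD)+
      have cnt: "real i * real (card C) * (dispersion d A + dispersion d C + ddist d C A)
          \<le> real n * (real n - 1) * (ddist d C A + ddist d C Bb)"
        apply (rule count_ineq[where a="real (card A)" and b="real (card Bb)"])
        using dispnn subs ddnn cC cab cac i m1 m2 m3 swp by auto
      have cnt2: "real i * real (card C) * D \<le> real n * (real n - 1) * ddist d C Gi"
        using cnt Ddec ddG by simp
      have nn1: "real n * (real n - 1) > 0" using n2 by simp
      have b_part: "real (card C) * (real i / (real n * (real n - 1))) * D \<le> ddist d C Gi"
      proof -
        have "real (card C) * (real i / (real n * (real n - 1))) * D
            = (real i * real (card C) * D) / (real n * (real n - 1))" by simp
        also have "\<dots> \<le> ddist d C Gi" using cnt2 nn1 by (simp add: pos_divide_le_eq mult.commute)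
        finally show ?thesis .
      qed
      have sm: "(\<Sum>x\<in>C. \<alpha> * marg f x Gi) \<le> (\<Sum>x\<in>C. m i)"
      proof (rule sum_mono)
        fix x assume "x \<in> C"
        then have "x \<in> X" "x \<notin> G i" using subs unfolding C_def Gi_def by auto
        then show "\<alpha> * marg f x Gi \<le> m i" unfolding m_def Gi_def using grd[OF i] by blast
      qed
      have avg: "real (card C) * m i \<ge> \<alpha> * (\<Sum>x\<in>C. marg f x Gi)"
        using sm by (simp add: sum_distrib_left)
      have sumf: "(\<Sum>x\<in>C. marg f x Gi) = (1/2) * (\<Sum>x\<in>C. marg s x Gi) + lam * ddist d C Gi"
      proof -
        have "(\<Sum>x\<in>C. marg f x Gi) = (\<Sum>x\<in>C. (1/2) * marg s x Gi + lam * (\<Sum>y\<in>Gi. d x y))"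
          by (rule sum.cong[OF refl]) (rule margf, use subs finGi in \<open>auto simp: C_def\<close>)
        then show ?thesis by (simp add: sum.distrib sum_distrib_left ddist_def)
      qed
      have gT: "g * (s (Gi \<union> C) - s Gi) \<le> (\<Sum>x\<in>C. marg s x Gi)"
      proof (rule gprop)
        show "C \<subseteq> X" by (rule subs)
        show "Gi \<subseteq> Bstar \<union> set xs - C" using Gsub unfolding C_def Gi_def by auto
        show "card C \<le> n" using card_mono[OF finB, of C] assms(12) unfolding C_def by auto
      qed (use finGi in auto)
      define T where "T = s (Gi \<union> Bstar) - s Gi"
      have GC: "Gi \<union> C = Gi \<union> Bstar" unfolding C_def by auto
      have T0: "T \<ge> 0" unfolding T_def
        using mono_sub[OF assms(5), of "Gi \<union> Bstar" Gi] finGi finB subs assms(11) by auto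
      have TK: "K \<le> T" unfolding T_def K_def
        using mono_sub[OF assms(5), of "Gi \<union> Bstar" Bstar] mono_sub[OF assms(5), of "set xs" Gi]
          finGi finB subs assms(11) setX Gsub unfolding Gi_def by auto
      have cpos: "real (card C) > 0" using cC by simp
      have cn: "real (card C) \<le> real n" using cac by simp
      have a_part: "real (card C) * (g * K / (2 * real n)) \<le> (1/2) * (g * T)"
      proof -
        have "real (card C) * K / real n \<le> T"
        proof (cases "K \<ge> 0")
          case True
          have "real (card C) * K \<le> real n * K" using cn True by (rule mult_right_mono)
          then have "real (card C) * K / real n \<le> K" using n2 by (simp add: divide_le_eq mult.commute)
          then show ?thesis using TK by simp
        next
          case False
          have "real (card C) * K \<le> 0" using cpos False by (intro mult_nonneg_nonpos) auto
          then have "real (card C) * K / real n \<le> 0" using n2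
            by (simp add: divide_nonpos_nonneg)
          then show ?thesis using T0 by simp
        qed
        then have "g * (real (card C) * K / real n) \<le> g * T" using g(2) by (rule mult_left_mono)
        then show ?thesis by (simp add: mult.left_commute)
      qed
      have "real (card C) * (\<alpha> * (g * K / (2 * real n) + lam * (real i / (real n * (real n - 1))) * D))
          = \<alpha> * (real (card C) * (g * K / (2 * real n)) + lam * (real (card C) * (real i / (real n * (real n - 1))) * D))"
        by (simp add: algebra_simps)
      also have "\<dots> \<le> \<alpha> * ((1/2) * (g * T) + lam * ddist d C Gi)"
        using a_part b_part assms(7,8) by (intro mult_left_mono add_mono) auto
      also have "\<dots> \<le> \<alpha> * (\<Sum>x\<in>C. marg f x Gi)"
        using gT GC assms(8) unfolding sumf T_def by (intro mult_left_mono) auto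
      also have "\<dots> \<le> real (card C) * m i" by (rule avg)
      finally show ?thesis using cpos by (simp only: mult_le_cancel_left_pos)
    qed
    have "(\<Sum>i<n. \<alpha> * (g * K / (2 * real n) + lam * (real i / (real n * (real n - 1))) * D))
        = (\<Sum>i<n. \<alpha> * g * K / (2 * real n) + (\<alpha> * lam * D / (real n * (real n - 1))) * real i)"
      by (rule sum.cong[OF refl]) (simp add: algebra_simps)
    also have "\<dots> = real n * (\<alpha> * g * K / (2 * real n)) + (\<alpha> * lam * D / (real n * (real n - 1))) * (real n * (real n - 1) / 2)"
    proof -
      define c1 where "c1 = \<alpha> * g * K / (2 * real n)"
      define c2 where "c2 = \<alpha> * lam * D / (real n * (real n - 1))"
      have "(\<Sum>i<n. c1 + c2 * real i) = (\<Sum>i<n. c1) + (\<Sum>i<n. c2 * real i)" by (rule sum.distrib)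
      also have "(\<Sum>i<n. c2 * real i) = c2 * (\<Sum>i<n. real i)" by (rule sum_distrib_left[symmetric])
      finally show ?thesis unfolding c1_def c2_def sum_real_lessThan by simp
    qed
    also have "\<dots> = \<alpha> * g * K / 2 + \<alpha> * lam * D / 2" using n2 by (simp add: field_simps)
    finally have sumeq: "(\<Sum>i<n. \<alpha> * (g * K / (2 * real n) + lam * (real i / (real n * (real n - 1))) * D))
        = \<alpha> * g * K / 2 + \<alpha> * lam * D / 2" .
    have "(\<Sum>i<n. m i) \<ge> (\<Sum>i<n. \<alpha> * (g * K / (2 * real n) + lam * (real i / (real n * (real n - 1))) * D))"
      by (rule sum_mono) (use step in auto)
    then have fGn: "f (set xs) \<ge> \<alpha> * g * K / 2 + \<alpha> * lam * D / 2"
      using sumeq tele fG0 Gn by simp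
    have ag: "\<alpha> * g \<le> 1" using assms(8,9) g(2,3) by (simp add: mult_le_one)
    have p1: "(1 - \<alpha> * g) * s (set xs) \<ge> 0" using ag sGn by simp
    have p2: "\<alpha> * lam * D * (1 - g) \<ge> 0" using assms(7,8) D0 g(3) by simp
    have e1: "\<alpha> / 2 * g * (s Bstar + lam * D) = \<alpha> * g * K / 2 + \<alpha> * lam * D / 2
        + (\<alpha> * g * s (set xs)) / 2 - \<alpha> * lam * D * (1 - g) / 2"
      unfolding K_def by (simp add: field_simps)
    have e2: "(1 - \<alpha> * g) * s (set xs) = s (set xs) - \<alpha> * g * s (set xs)" by (simp add: algebra_simps)
    have e3: "f (set xs) = 1/2 * s (set xs) + lam * dispersion d (set xs)" unfolding f_def by simp
    show ?thesis unfolding e1 using fGn p1 p2 e2 e3 by linarith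
  next
    case False
    then obtain i where i: "i < n" "card (Bstar - G i) < 2" by auto
    let ?Gi = "G i"
    have "card Bstar - card ?Gi \<le> card (Bstar - ?Gi)" by (rule diff_card_le_card_Diff[OF Gfin])
    then have "n - i \<le> 1" using i cardG[of i] assms(12) by simp
    then have iN: "Suc i = n" using i by simp
    have cdiff: "card (Bstar - ?Gi) = 1" using \<open>card Bstar - card ?Gi \<le> _\<close> i cardG[of i] assms(12) by simp
    then obtain v where v: "Bstar - ?Gi = {v}" by (rule card_1_singletonE)
    have cint: "card (Bstar \<inter> ?Gi) + card (Bstar - ?Gi) = n"
      using card_Un_disjoint[of "Bstar \<inter> ?Gi" "Bstar - ?Gi"] finB assms(12)
      by (metis Int_Diff_Un Int_Diff_disjoint finite_Diff finite_Int)
    have "Bstar \<inter> ?Gi = ?Gi"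
      by (rule card_subset_eq[OF Gfin]) (use cint cdiff cardG[of i] i iN in auto)
    then have Gsb: "?Gi \<subseteq> Bstar" by blast
    have Oeq: "Bstar = ?Gi \<union> {v}" using v Gsb by blast
    have vX: "v \<in> X" "v \<notin> ?Gi" using v assms(11) by auto
    have "m i \<ge> \<alpha> * marg f v ?Gi" unfolding m_def by (rule grd[OF i(1) vX])
    then have mi: "m i \<ge> \<alpha> * (f Bstar - f ?Gi)" unfolding marg_def using Oeq by simp
    have "f (G n) = f ?Gi + m i" unfolding m_def marg_def using iN[symmetric] Gsuc i(1) by simp
    moreover have "(1 - \<alpha>) * f ?Gi \<ge> 0" using fnn GX assms(9) by simp
    ultimately have "f (set xs) \<ge> \<alpha> * f Bstar" using mi Gn by (simp add: algebra_simps)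
    then have fb: "f (set xs) \<ge> \<alpha> * ((1/2) * s Bstar + lam * D)" unfolding f_def D_def by simp
    have q1: "\<alpha> * s Bstar * (1 - g) \<ge> 0" using assms(8) sO g(3) by simp
    have q2: "\<alpha> * lam * D * (2 - g) \<ge> 0" using assms(7,8) D0 g(3) by simp
    show ?thesis using fb q1 q2 sGn unfolding f_def by (simp add: algebra_simps; linarith)
  qed
  show ?thesis using goal_real g(1) by (simp add: D_def)
qed

end
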